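(* For partitions $\lambda$ and $\mu$, $h_\lambda[\Xi_\mu]=|\mathcal C_{\lambda,\mu}|$, where $\mathcal C_{\lambda,\mu}$ is the set of sequences $(\alpha^{(1)},\ldots,\alpha^{(\ell(\lambda))})$ of weak compositions such that $\alpha^{(i)}$ is a weak composition of $\lambda_i$ of length $\ell(\mu)$ and $\mu_j$ divides $\alpha^{(i)}_j$ for all $1\le i\le\ell(\lambda)$, $1\le j\le\ell(\mu)$.
   Context: A weak composition of $m$ of length $\ell$ is a sequence of $\ell$ nonnegative integers summing to $m$. For $f\in Sym$ and a partition $\mu$, $f[\Xi_\mu]$ denotes $f$ evaluated at the multiset of eigenvalues of a permutation matrix of cycle type $\mu$ (the $\mu_i$-th roots of unity for each part $\mu_i$); equivalently substitute $p_k\mapsto\sum_{d\mid k}d\,m_d(\mu)$. $h_\lambda=h_{\lambda_1}\cdots h_{\lambda_{\ell(\lambda)}}$. *)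

theory Defs
  imports Complex_Main
begin

definition is_partition :: "nat list \<Rightarrow> bool" where
  "is_partition lam \<longleftrightarrow> sorted_wrt (\<ge>) lam \<and> (\<forall>x\<in>set lam. 0 < x)"

definition weak_comps :: "nat \<Rightarrow> nat \<Rightarrow> nat list set" where
  "weak_comps m l = {a. length a = l \<and> sum_list a = m}"

text \<open>The multiset (as a list) of eigenvalues of a permutation matrix of cycle type \<open>\<mu>\<close>:
  for each part \<open>\<mu>_j\<close>, all \<open>\<mu>_j\<close>-th roots of unity.\<close>
definition Xi :: "nat list \<Rightarrow> complex list" where
  "Xi mu = concat (map (\<lambda>m. map (\<lambda>k. cis (2 * pi * real k / real m)) [0..<m]) mu)"

definition h_eval :: "nat \<Rightarrow> complex list \<Rightarrow> complex" where
  "h_eval n xs = (\<Sum>b\<in>weak_comps n (length xs). \<Prod>i<length xs. (xs ! i) ^ (b ! i))"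

definition h_part_eval :: "nat list \<Rightarrow> complex list \<Rightarrow> complex" where
  "h_part_eval lam xs = (\<Prod>i<length lam. h_eval (lam ! i) xs)"

definition C_set :: "nat list \<Rightarrow> nat list \<Rightarrow> nat list list set" where
  "C_set lam mu = {as. length as = length lam \<and>
     (\<forall>i<length lam. as ! i \<in> weak_comps (lam ! i) (length mu) \<and>
        (\<forall>j<length mu. mu ! j dvd (as ! i) ! j))}"

end

theory Submission
  imports Defs "HOL-Computational_Algebra.Computational_Algebra"
begin

lemma prod_nth_list: "(\<Prod>i<length xs. f (xs ! i)) = prod_list (map f xs)"
  by (induction xs) (simp_all add: prod.lessThan_Suc_shift del: prod.lessThan_Suc)

lemma finite_weak_comps: "finite (weak_comps n l)"
proof -
  have "weak_comps n l \<subseteq> {xs. set xs \<subseteq> {0..n} \<and> length xs = l}"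
    unfolding weak_comps_def
    by (auto simp: member_le_sum_list)
  thus ?thesis by (rule finite_subset) (simp add: finite_lists_length_eq)
qed

lemma weak_comps_0: "weak_comps n 0 = (if n = 0 then {[]} else {})"
  by (auto simp: weak_comps_def)

lemma weak_comps_Suc:
  "weak_comps n (Suc l) = (\<Union>a\<in>{..n}. (\<lambda>b. a # b) ` weak_comps (n - a) l)"
  unfolding weak_comps_def
  by (auto simp: length_Suc_conv image_iff intro!: bexI[where x="hd _"])

lemma sum_weak_comps_Suc:
  "sum F (weak_comps n (Suc l)) = (\<Sum>a\<le>n. \<Sum>b\<in>weak_comps (n - a) l. F (a # b))"
  unfolding weak_comps_Suc
  by (subst sum.UNION_disjoint) (auto simp: finite_weak_comps sum.reindex)

definition G :: "complex \<Rightarrow> complex fps" where "G x = Abs_fps (\<lambda>n. x ^ n)"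
definition H :: "complex list \<Rightarrow> complex fps" where "H xs = Abs_fps (\<lambda>n. h_eval n xs)"
definition D :: "nat \<Rightarrow> complex fps" where "D m = Abs_fps (\<lambda>n. if m dvd n then 1 else 0)"
definition Nc :: "nat \<Rightarrow> nat list \<Rightarrow> nat" where
  "Nc n mu = (\<Sum>c\<in>weak_comps n (length mu). if (\<forall>j<length mu. mu ! j dvd c ! j) then 1 else 0)"
definition CF :: "nat list \<Rightarrow> complex fps" where "CF mu = Abs_fps (\<lambda>n. of_nat (Nc n mu))"

lemma h_eval_Cons: "h_eval n (x # xs) = (\<Sum>a\<le>n. x ^ a * h_eval (n - a) xs)"
  unfolding h_eval_def
  by (simp add: sum_weak_comps_Suc prod.lessThan_Suc_shift sum_distrib_left
           del: prod.lessThan_Suc)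

lemma H_Cons: "H (x # xs) = G x * H xs"
  by (rule fps_ext) (simp add: H_def G_def fps_mult_nth h_eval_Cons atLeast0AtMost)

lemma H_Nil: "H [] = 1"
  by (rule fps_ext) (simp add: H_def h_eval_def weak_comps_0)

lemma H_append: "H (xs @ ys) = H xs * H ys"
  by (induction xs) (simp_all add: H_Nil H_Cons mult.assoc)

lemma H_map: "H (map f xs) = prod_list (map (\<lambda>x. G (f x)) xs)"
  by (induction xs) (simp_all add: H_Nil H_Cons)

lemma G_inv: "G x * (1 - fps_const x * fps_X) = 1"
proof -
  have e: "G x * (1 - fps_const x * fps_X) = G x - (fps_const x * G x) * fps_X ^ 1"
    by (simp add: right_diff_distrib mult.assoc mult.left_commute)
  show ?thesis
  proof (rule fps_ext)
    fix n
    show "(G x * (1 - fps_const x * fps_X)) $ n = 1 $ n"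
      unfolding e fps_sub_nth fps_X_power_mult_right_nth
      by (cases n) (simp_all add: G_def)
  qed
qed

definition zr :: "nat \<Rightarrow> nat \<Rightarrow> complex" where
  "zr m k = cis (2 * pi * real k / real m)"

lemma poly_roots_prod:
  assumes m: "m > 0"
  shows "(\<Prod>k<m. [:1, - zr m k:]) = 1 - monom 1 m"
proof (rule poly_eqI_degree[where A = "insert 0 {w. w ^ m = 1}"])
  have cardA: "card (insert (0::complex) {w. w ^ m = 1}) = Suc m"
    using m by (subst card_insert_disjoint) (auto simp: card_roots_unity_eq finite_roots_unity power_0_left)
  have "degree (\<Prod>k<m. [:1, - zr m k:]) \<le> (\<Sum>k<m. degree [:1, - zr m k:])"
    using degree_prod_sum_le[of "{..<m}" "\<lambda>k. [:1, - zr m k:]"] by (simp add: o_def)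
  also have "\<dots> \<le> (\<Sum>k<m. 1)" by (intro sum_mono) simp
  finally show "degree (\<Prod>k<m. [:1, - zr m k:]) < card (insert (0::complex) {w. w ^ m = 1})"
    using cardA by simp
  have "degree (1 - monom (1::complex) m) \<le> max (degree (1::complex poly)) (degree (monom (1::complex) m))"
    by (rule degree_diff_le_max)
  also have "\<dots> \<le> m" by (simp add: degree_monom_eq)
  finally show "degree (1 - monom (1::complex) m) < card (insert (0::complex) {w. w ^ m = 1})"
    using cardA by simp
  fix w :: complex assume w: "w \<in> insert 0 {w. w ^ m = 1}"
  show "poly (\<Prod>k<m. [:1, - zr m k:]) w = poly (1 - monom 1 m) w"
  proof (cases "w = 0")
    case True thus ?thesis using m by (simp add: poly_prod poly_monom)
  next
    case False
    with w have wm: "w ^ m = 1" by simp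
    hence "(1 / w) ^ m = 1" by (simp add: power_divide)
    then obtain k where k: "k < m" "zr m k = 1 / w"
      using bij_betw_roots_unity[OF m] unfolding bij_betw_def zr_def by force
    have "poly (\<Prod>k<m. [:1, - zr m k:]) w = (\<Prod>k<m. 1 - zr m k * w)"
      by (simp add: poly_prod mult.commute)
    also have "\<dots> = 0"
      using k False by (intro prod_zero) (auto intro!: bexI[of _ k])
    finally show ?thesis using wm by (simp add: poly_monom)
  qed
qed

lemma fps_roots_prod:
  assumes m: "m > 0"
  shows "(\<Prod>k<m. (1 - fps_const (zr m k) * fps_X)) = 1 - fps_X ^ m"
proof -
  have "fps_of_poly (\<Prod>k<m. [:1, - zr m k:]) = fps_of_poly (1 - monom 1 m)"
    using poly_roots_prod[OF m] by simp
  moreover have f: "fps_of_poly [:1, - c:] = 1 - fps_const c * fps_X" for c :: complex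
    by (rule fps_ext) (simp add: fps_of_poly_nth coeff_pCons split: nat.split)
  ultimately show ?thesis
    by (simp only: fps_of_poly_prod fps_of_poly_diff fps_of_poly_monom' fps_of_poly_1 f)
qed


lemma D_inv:
  assumes m: "m > 0"
  shows "D m * (1 - fps_X ^ m) = 1"
proof -
  have e: "D m * (1 - fps_X ^ m) = D m - D m * fps_X ^ m" by (simp add: right_diff_distrib)
  show ?thesis
  proof (rule fps_ext)
    fix n
    show "(D m * (1 - fps_X ^ m)) $ n = 1 $ n"
    proof (cases "n < m")
      case True
      thus ?thesis using m unfolding e fps_sub_nth fps_X_power_mult_right_nth
        by (cases "n = 0") (auto simp: D_def dest: nat_dvd_not_less)
    next
      case False
      have "(m dvd n) = (m dvd (n - m))"
        using False by (simp add: dvd_minus_self)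
      thus ?thesis using False m unfolding e fps_sub_nth fps_X_power_mult_right_nth
        by (simp add: D_def)
    qed
  qed
qed

lemma H_roots:
  assumes m: "m > 0"
  shows "H (map (zr m) [0..<m]) = D m"
proof -
  have "H (map (zr m) [0..<m]) = (\<Prod>k<m. G (zr m k))"
    by (simp add: H_map prod.distinct_set_conv_list[symmetric] atLeast0LessThan)
  hence a: "H (map (zr m) [0..<m]) * (1 - fps_X ^ m) = 1"
    by (simp add: fps_roots_prod[OF m, symmetric] prod.distrib[symmetric] G_inv)
  have "H (map (zr m) [0..<m]) = H (map (zr m) [0..<m]) * (D m * (1 - fps_X ^ m))"
    by (simp add: D_inv[OF m])
  also have "\<dots> = D m * (H (map (zr m) [0..<m]) * (1 - fps_X ^ m))"
    by (rule mult.left_commute)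
  also have "\<dots> = D m" by (simp add: a)
  finally show ?thesis .
qed

lemma H_Xi:
  assumes "\<forall>m\<in>set mu. m > 0"
  shows "H (Xi mu) = prod_list (map D mu)"
  using assms
proof (induction mu)
  case Nil thus ?case by (simp add: Xi_def H_Nil)
next
  case (Cons m mu)
  have "Xi (m # mu) = map (zr m) [0..<m] @ Xi mu"
    by (simp add: Xi_def zr_def)
  moreover have "m > 0" using Cons.prems by simp
  moreover have "H (Xi mu) = prod_list (map D mu)" using Cons by simp
  ultimately show ?case by (simp only: H_append H_roots list.map prod_list.Cons)
qed


lemma all_less_Suc_split: "(\<forall>j<Suc n. P j) = (P 0 \<and> (\<forall>j<n. P (Suc j)))"
  using less_Suc_eq_0_disj by auto

lemma Nc_Cons: "Nc n (m # mu) = (\<Sum>a\<le>n. if m dvd a then Nc (n - a) mu else 0)"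
  unfolding Nc_def
  by (simp add: sum_weak_comps_Suc all_less_Suc_split; intro sum.cong; simp)

lemma CF_Nil: "CF [] = 1"
  by (rule fps_ext) (simp add: CF_def Nc_def weak_comps_0)

lemma CF_Cons: "CF (m # mu) = D m * CF mu"
  by (rule fps_ext) (simp add: CF_def D_def fps_mult_nth Nc_Cons atLeast0AtMost; intro sum.cong; simp)

lemma CF_eq: "CF mu = prod_list (map D mu)"
  by (induction mu) (simp_all add: CF_Nil CF_Cons)

lemma Nc_card: "Nc n mu = card {c \<in> weak_comps n (length mu). \<forall>j<length mu. mu ! j dvd c ! j}"
  unfolding Nc_def sum.inter_filter[OF finite_weak_comps, symmetric] by simp

lemma card_lists_nth:
  assumes fin: "\<And>x. finite (T x)"
  shows "card {as. length as = length ls \<and> (\<forall>i<length ls. as ! i \<in> T (ls ! i))}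
         = prod_list (map (\<lambda>l. card (T l)) ls)"
proof (induction ls)
  case Nil thus ?case by simp
next
  case (Cons l ls)
  let ?A = "\<lambda>ls. {as. length as = length ls \<and> (\<forall>i<length ls. as ! i \<in> T (ls ! i))}"
  have e: "?A (l # ls) = (\<lambda>(a, as). a # as) ` (T l \<times> ?A ls)"
  proof (intro equalityI subsetI)
    fix as assume "as \<in> ?A (l # ls)"
    hence len: "length as = Suc (length ls)" and h: "\<forall>i<Suc (length ls). as ! i \<in> T ((l # ls) ! i)"
      by simp_all
    from len obtain a as' where as: "as = a # as'" "length as' = length ls"
      by (cases as) auto
    from h have "a \<in> T l" "as' \<in> ?A ls"
      unfolding all_less_Suc_split as by (simp_all add: as(2))
    thus "as \<in> (\<lambda>(a, as). a # as) ` (T l \<times> ?A ls)"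
      unfolding as(1) by (intro image_eqI[of _ _ "(a, as')"]) simp_all
  next
    fix as assume "as \<in> (\<lambda>(a, as). a # as) ` (T l \<times> ?A ls)"
    then obtain p where "p \<in> T l \<times> ?A ls" "as = (\<lambda>(a, as). a # as) p" by (rule imageE)
    then obtain a as' where "as = a # as'" "a \<in> T l" "as' \<in> ?A ls" by (cases p) auto
    thus "as \<in> ?A (l # ls)" by (simp add: all_less_Suc_split)
  qed
  have "card (?A (l # ls)) = card (T l \<times> ?A ls)"
    unfolding e by (rule card_image) (auto simp: inj_on_def)
  thus ?case using Cons by (simp add: card_cartesian_product)
qed

lemma of_nat_prod_list_map:
  "(of_nat (prod_list (map f xs)) :: complex) = prod_list (map (\<lambda>x. of_nat (f x)) xs)"
  by (induction xs) simp_all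

theorem proposition29:
  fixes lam mu :: "nat list"
  assumes "is_partition lam" and "is_partition mu"
  shows "h_part_eval lam (Xi mu) = of_nat (card (C_set lam mu))"
proof -
  have pos: "\<forall>m\<in>set mu. m > 0" using assms(2) by (simp add: is_partition_def)
  have hx: "h_eval n (Xi mu) = of_nat (Nc n mu)" for n
  proof -
    have "H (Xi mu) = CF mu" by (simp add: H_Xi[OF pos] CF_eq)
    hence "H (Xi mu) $ n = CF mu $ n" by simp
    thus ?thesis by (simp add: H_def CF_def)
  qed
  have "C_set lam mu = {as. length as = length lam \<and> (\<forall>i<length lam. as ! i \<in>
      (\<lambda>n. {c \<in> weak_comps n (length mu). \<forall>j<length mu. mu ! j dvd c ! j}) (lam ! i))}"
    unfolding C_set_def by auto
  hence "card (C_set lam mu) = prod_list (map (\<lambda>l. card {c \<in> weak_comps l (length mu). \<forall>j<length mu. mu ! j dvd c ! j}) lam)"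
    using card_lists_nth[of "\<lambda>n. {c \<in> weak_comps n (length mu). \<forall>j<length mu. mu ! j dvd c ! j}" lam]
    by (simp add: finite_weak_comps)
  hence "card (C_set lam mu) = prod_list (map (\<lambda>l. Nc l mu) lam)"
    by (simp add: Nc_card)
  thus ?thesis
    unfolding h_part_eval_def prod_nth_list by (simp add: hx of_nat_prod_list_map o_def prod_nth_list[where f="\<lambda>l. of_nat (Nc l mu) :: complex"])
qed

end
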